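(* Let $d,N\in\mathbb{N}$ and, for each $k=0,\dots,N-1$, let $\mathcal{L}^k_d:(\mathbb{R}^d)^{k+2}\times(\mathbb{R}^d)^{N+1-k}\to\mathbb{R}$, $(x_0,\dots,x_{k+1};y_k,\dots,y_N)\mapsto\mathcal{L}^k_d(x_{(0,k+1)},y_{(k,N)})$, be differentiable. Fix $x_a,x_b,y_a,y_b\in\mathbb{R}^d$ and consider discrete curves $\{x_k\}_{k=0}^N,\{y_k\}_{k=0}^N\subset\mathbb{R}^d$ with $x_0=x_a$, $x_N=x_b$, $y_0=y_a$, $y_N=y_b$, and the discrete action $$S_d=\sum_{k=0}^{N-1}\mathcal{L}^k_d(x_{(0,k+1)},y_{(k,N)}).$$ Consider restricted variations: for $\{\eta_k\}_{k=0}^N\subset\mathbb{R}^d$ with $\eta_0=\eta_N=0$ and $\epsilon\in\mathbb{R}$, the varied curves are $x_k+\epsilon\eta_k$, $y_k+\epsilon\eta_k$ (the same variation for both). Then a pair of discrete curves satisfies $\frac{d}{d\epsilon}S_d\big|_{\epsilon=0}=0$ for all such $\{\eta_k\}$ if and only if $$\sum_{i=k-1}^{N-1}D_{x_k}\mathcal{L}^i_d(x_{(0,i+1)},y_{(i,N)})+\sum_{i=0}^{k}D_{y_k}\mathcal{L}^i_d(x_{(0,i+1)},y_{(i,N)})=0\qquad\text{for }k=1,\dots,N-1,$$ where $D_{x_k}=\partial/\partial x_k$ and $D_{y_k}=\partial/\partial y_k$.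
   Context: Notation: $x_{(0,k+1)}:=(x_0,\dots,x_{k+1})\in(\mathbb{R}^d)^{k+2}$ and $y_{(k,N)}:=(y_k,\dots,y_N)\in(\mathbb{R}^d)^{N+1-k}$. *)

theory Defs
  imports "HOL-Analysis.Analysis"
begin

text \<open>This is how a
  function on (R^d)^I x (R^d)^J is represented.\<close>
definition depends_only ::
  "nat set \<Rightarrow> nat set \<Rightarrow> ((nat \<Rightarrow> 'a) \<Rightarrow> (nat \<Rightarrow> 'a) \<Rightarrow> 'b) \<Rightarrow> bool" where
  "depends_only I J F \<longleftrightarrow>
     (\<forall>x x' y y'. (\<forall>i\<in>I. x i = x' i) \<longrightarrow> (\<forall>j\<in>J. y j = y' j) \<longrightarrow> F x y = F x' y')"

text \<open>Frechet differentiability (everywhere) of F as a function of the finitely many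
  vector variables x_i (i in I) and y_j (j in J), using the (equivalent) l1 product norm.\<close>
definition diff_in_coords ::
  "nat set \<Rightarrow> nat set \<Rightarrow> ((nat \<Rightarrow> 'a::real_normed_vector) \<Rightarrow> (nat \<Rightarrow> 'a) \<Rightarrow> real) \<Rightarrow> bool" where
  "diff_in_coords I J F \<longleftrightarrow>
     (\<forall>x y. \<exists>Dx Dy. (\<forall>i\<in>I. bounded_linear (Dx i)) \<and> (\<forall>j\<in>J. bounded_linear (Dy j)) \<and>
        (\<forall>e>0. \<exists>\<delta>>0. \<forall>h g.
           (\<forall>i. i \<notin> I \<longrightarrow> h i = 0) \<longrightarrow> (\<forall>j. j \<notin> J \<longrightarrow> g j = 0) \<longrightarrow>
           (\<Sum>i\<in>I. norm (h i)) + (\<Sum>j\<in>J. norm (g j)) < \<delta> \<longrightarrow>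
           \<bar>F (\<lambda>i. x i + h i) (\<lambda>j. y j + g j) - F x y
              - (\<Sum>i\<in>I. Dx i (h i)) - (\<Sum>j\<in>J. Dy j (g j))\<bar>
             \<le> e * ((\<Sum>i\<in>I. norm (h i)) + (\<Sum>j\<in>J. norm (g j)))))"

definition discrete_action ::
  "nat \<Rightarrow> (nat \<Rightarrow> (nat \<Rightarrow> 'a) \<Rightarrow> (nat \<Rightarrow> 'a) \<Rightarrow> real) \<Rightarrow> (nat \<Rightarrow> 'a) \<Rightarrow> (nat \<Rightarrow> 'a) \<Rightarrow> real" where
  "discrete_action N L x y = (\<Sum>k<N. L k x y)"

end

theory Submission
  imports Defs
begin

definition dprop where
  "dprop I J F x y Dx Dy \<longleftrightarrow> (\<forall>i\<in>I. bounded_linear (Dx i)) \<and> (\<forall>j\<in>J. bounded_linear (Dy j)) \<and>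
        (\<forall>e>0. \<exists>\<delta>>0. \<forall>h g.
           (\<forall>i. i \<notin> I \<longrightarrow> h i = 0) \<longrightarrow> (\<forall>j. j \<notin> J \<longrightarrow> g j = 0) \<longrightarrow>
           (\<Sum>i\<in>I. norm (h i)) + (\<Sum>j\<in>J. norm (g j)) < \<delta> \<longrightarrow>
           \<bar>F (\<lambda>i. x i + h i) (\<lambda>j. y j + g j) - F x y
              - (\<Sum>i\<in>I. Dx i (h i)) - (\<Sum>j\<in>J. Dy j (g j))\<bar>
             \<le> e * ((\<Sum>i\<in>I. norm (h i)) + (\<Sum>j\<in>J. norm (g j))))"

lemma diff_dprop: "diff_in_coords I J F \<Longrightarrow> \<exists>Dx Dy. dprop I J F x y Dx Dy"
  unfolding diff_in_coords_def dprop_def by blast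

lemma dir_deriv:
  fixes F :: "(nat \<Rightarrow> 'a::real_normed_vector) \<Rightarrow> (nat \<Rightarrow> 'a) \<Rightarrow> real"
  assumes fin: "finite I" "finite J"
    and P: "dprop I J F x y Dx Dy"
    and eta: "\<forall>i. i \<notin> I \<longrightarrow> \<eta> i = 0" "\<forall>j. j \<notin> J \<longrightarrow> \<zeta> j = 0"
  shows "((\<lambda>t. F (\<lambda>i. x i + t *\<^sub>R \<eta> i) (\<lambda>j. y j + t *\<^sub>R \<zeta> j)) has_real_derivative
           ((\<Sum>i\<in>I. Dx i (\<eta> i)) + (\<Sum>j\<in>J. Dy j (\<zeta> j)))) (at 0)"
proof -
  define C where "C = (\<Sum>i\<in>I. norm (\<eta> i)) + (\<Sum>j\<in>J. norm (\<zeta> j))"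
  have C0: "C \<ge> 0" unfolding C_def by (simp add: sum_nonneg add_nonneg_nonneg)
  have bl1: "\<forall>i\<in>I. bounded_linear (Dx i)" and bl2: "\<forall>j\<in>J. bounded_linear (Dy j)"
    and E: "\<forall>e>0. \<exists>\<delta>>0. \<forall>h g.
           (\<forall>i. i \<notin> I \<longrightarrow> h i = 0) \<longrightarrow> (\<forall>j. j \<notin> J \<longrightarrow> g j = 0) \<longrightarrow>
           (\<Sum>i\<in>I. norm (h i)) + (\<Sum>j\<in>J. norm (g j)) < \<delta> \<longrightarrow>
           \<bar>F (\<lambda>i. x i + h i) (\<lambda>j. y j + g j) - F x y
              - (\<Sum>i\<in>I. Dx i (h i)) - (\<Sum>j\<in>J. Dy j (g j))\<bar>
             \<le> e * ((\<Sum>i\<in>I. norm (h i)) + (\<Sum>j\<in>J. norm (g j)))"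
    using P unfolding dprop_def by auto
  let ?D = "(\<Sum>i\<in>I. Dx i (\<eta> i)) + (\<Sum>j\<in>J. Dy j (\<zeta> j))"
  show ?thesis unfolding has_field_derivative_def has_derivative_at_alt
  proof (intro conjI allI impI)
    show "bounded_linear ((*) ?D)" by (rule bounded_linear_mult_right)
    fix e :: real assume e: "e > 0"
    then have "e / (C+1) > 0" using C0 by simp
    then obtain \<delta> where d: "\<delta> > 0" and H: "\<forall>h g.
           (\<forall>i. i \<notin> I \<longrightarrow> h i = 0) \<longrightarrow> (\<forall>j. j \<notin> J \<longrightarrow> g j = 0) \<longrightarrow>
           (\<Sum>i\<in>I. norm (h i)) + (\<Sum>j\<in>J. norm (g j)) < \<delta> \<longrightarrow>
           \<bar>F (\<lambda>i. x i + h i) (\<lambda>j. y j + g j) - F x y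
              - (\<Sum>i\<in>I. Dx i (h i)) - (\<Sum>j\<in>J. Dy j (g j))\<bar>
             \<le> e / (C+1) * ((\<Sum>i\<in>I. norm (h i)) + (\<Sum>j\<in>J. norm (g j)))"
      using E by blast
    show "\<exists>d>0. \<forall>t. norm (t - 0) < d \<longrightarrow>
      norm (F (\<lambda>i. x i + t *\<^sub>R \<eta> i) (\<lambda>j. y j + t *\<^sub>R \<zeta> j) - F (\<lambda>i. x i + 0 *\<^sub>R \<eta> i) (\<lambda>j. y j + 0 *\<^sub>R \<zeta> j) - ?D * (t - 0))
        \<le> e * norm (t - 0)"
    proof (intro exI[of _ "\<delta> / (C+1)"] conjI allI impI)
      show "\<delta> / (C+1) > 0" using d C0 by simp
      fix t :: real assume t: "norm (t - 0) < \<delta> / (C+1)"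
      have s1: "(\<Sum>i\<in>I. norm (t *\<^sub>R \<eta> i)) + (\<Sum>j\<in>J. norm (t *\<^sub>R \<zeta> j)) = \<bar>t\<bar> * C"
        unfolding C_def by (simp add: sum_distrib_left distrib_left)
      have "\<bar>t\<bar> * C \<le> \<bar>t\<bar> * (C+1)" by (intro mult_left_mono) auto
      also have "\<dots> < \<delta>" using t C0 by (simp add: pos_less_divide_eq)
      finally have lt: "\<bar>t\<bar> * C < \<delta>" .
      have s2: "(\<Sum>i\<in>I. Dx i (t *\<^sub>R \<eta> i)) = t * (\<Sum>i\<in>I. Dx i (\<eta> i))"
        unfolding sum_distrib_left
        by (rule sum.cong, simp, metis bl1 bounded_linear.linear linear_scale real_scaleR_def)
      have s3: "(\<Sum>j\<in>J. Dy j (t *\<^sub>R \<zeta> j)) = t * (\<Sum>j\<in>J. Dy j (\<zeta> j))"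
        unfolding sum_distrib_left
        by (rule sum.cong, simp, metis bl2 bounded_linear.linear linear_scale real_scaleR_def)
      have "\<bar>F (\<lambda>i. x i + t *\<^sub>R \<eta> i) (\<lambda>j. y j + t *\<^sub>R \<zeta> j) - F x y
              - (\<Sum>i\<in>I. Dx i (t *\<^sub>R \<eta> i)) - (\<Sum>j\<in>J. Dy j (t *\<^sub>R \<zeta> j))\<bar>
             \<le> e / (C+1) * (\<bar>t\<bar> * C)"
        using H[rule_format, of "\<lambda>i. t *\<^sub>R \<eta> i" "\<lambda>j. t *\<^sub>R \<zeta> j"] eta lt s1 by simp
      also have "\<dots> \<le> e * \<bar>t\<bar>"
      proof -
        have "e / (C+1) * (\<bar>t\<bar> * C) = (e * \<bar>t\<bar>) * (C / (C+1))" by (simp add: field_simps)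
        also have "\<dots> \<le> (e * \<bar>t\<bar>) * 1"
          using C0 e by (intro mult_left_mono) auto
        finally show ?thesis by simp
      qed
      finally show "norm (F (\<lambda>i. x i + t *\<^sub>R \<eta> i) (\<lambda>j. y j + t *\<^sub>R \<zeta> j) - F (\<lambda>i. x i + 0 *\<^sub>R \<eta> i) (\<lambda>j. y j + 0 *\<^sub>R \<zeta> j) - ?D * (t - 0))
        \<le> e * norm (t - 0)" using s2 s3 by (simp add: algebra_simps)
    qed
  qed
qed


lemma partial_x:
  fixes F :: "(nat \<Rightarrow> 'a::euclidean_space) \<Rightarrow> (nat \<Rightarrow> 'a) \<Rightarrow> real"
  assumes fin: "finite I" "finite J" and dep: "depends_only I J F"
    and P: "dprop I J F x y Dx Dy"
  shows "frechet_derivative (\<lambda>u. F (x(k:=u)) y) (at (x k)) = (if k\<in>I then Dx k else (\<lambda>_. 0))"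
proof (cases "k \<in> I")
  case True
  have bl1: "\<forall>i\<in>I. bounded_linear (Dx i)" and bl2: "\<forall>j\<in>J. bounded_linear (Dy j)"
    and E: "\<forall>e>0. \<exists>\<delta>>0. \<forall>h g.
           (\<forall>i. i \<notin> I \<longrightarrow> h i = 0) \<longrightarrow> (\<forall>j. j \<notin> J \<longrightarrow> g j = 0) \<longrightarrow>
           (\<Sum>i\<in>I. norm (h i)) + (\<Sum>j\<in>J. norm (g j)) < \<delta> \<longrightarrow>
           \<bar>F (\<lambda>i. x i + h i) (\<lambda>j. y j + g j) - F x y
              - (\<Sum>i\<in>I. Dx i (h i)) - (\<Sum>j\<in>J. Dy j (g j))\<bar>
             \<le> e * ((\<Sum>i\<in>I. norm (h i)) + (\<Sum>j\<in>J. norm (g j)))"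
    using P unfolding dprop_def by auto
  have "((\<lambda>u. F (x(k:=u)) y) has_derivative Dx k) (at (x k))"
    unfolding has_derivative_at_alt
  proof (intro conjI allI impI)
    show "bounded_linear (Dx k)" using bl1 True by auto
    fix e :: real assume e: "e > 0"
    then obtain \<delta> where d: "\<delta> > 0" and H: "\<forall>h g.
           (\<forall>i. i \<notin> I \<longrightarrow> h i = 0) \<longrightarrow> (\<forall>j. j \<notin> J \<longrightarrow> g j = 0) \<longrightarrow>
           (\<Sum>i\<in>I. norm (h i)) + (\<Sum>j\<in>J. norm (g j)) < \<delta> \<longrightarrow>
           \<bar>F (\<lambda>i. x i + h i) (\<lambda>j. y j + g j) - F x y
              - (\<Sum>i\<in>I. Dx i (h i)) - (\<Sum>j\<in>J. Dy j (g j))\<bar>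
             \<le> e * ((\<Sum>i\<in>I. norm (h i)) + (\<Sum>j\<in>J. norm (g j)))"
      using E by blast
    show "\<exists>d>0. \<forall>u. norm (u - x k) < d \<longrightarrow>
      norm (F (x(k:=u)) y - F (x(k := x k)) y - Dx k (u - x k)) \<le> e * norm (u - x k)"
    proof (intro exI[of _ \<delta>] conjI allI impI)
      show "\<delta> > 0" by (rule d)
      fix u assume u: "norm (u - x k) < \<delta>"
      define h where "h = (\<lambda>i. if i = k then u - x k else 0)"
      have hI: "\<forall>i. i \<notin> I \<longrightarrow> h i = 0" using True unfolding h_def by auto
      have s1: "(\<Sum>i\<in>I. norm (h i)) = norm (u - x k)"
        unfolding h_def using fin True by (simp add: if_distrib cong: if_cong)
      have s2: "(\<Sum>i\<in>I. Dx i (h i)) = Dx k (u - x k)"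
      proof -
        have "(\<Sum>i\<in>I. Dx i (h i)) = (\<Sum>i\<in>I. if i = k then Dx k (u - x k) else 0)"
          by (rule sum.cong) (auto simp: h_def bl1 bounded_linear.linear linear_0)
        then show ?thesis using fin True by simp
      qed
      have s3: "(\<Sum>j\<in>J. Dy j ((\<lambda>_. 0) j)) = 0"
        by (rule sum.neutral) (auto simp: bl2 bounded_linear.linear linear_0)
      have xe: "(\<lambda>i. x i + h i) = x(k:=u)" unfolding h_def by auto
      have "\<bar>F (\<lambda>i. x i + h i) (\<lambda>j. y j + 0) - F x y - (\<Sum>i\<in>I. Dx i (h i)) - (\<Sum>j\<in>J. Dy j ((\<lambda>_. 0) j))\<bar>
          \<le> e * ((\<Sum>i\<in>I. norm (h i)) + (\<Sum>j\<in>J. norm ((\<lambda>_. (0::'a)) j)))"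
        using H[rule_format, of h "\<lambda>_. 0"] hI s1 u by simp
      then show "norm (F (x(k:=u)) y - F (x(k := x k)) y - Dx k (u - x k)) \<le> e * norm (u - x k)"
        using s1 s2 s3 xe by simp
    qed
  qed
  then show ?thesis using True frechet_derivative_at by metis
next
  case False
  have "\<And>u. F (x(k:=u)) y = F x y" using dep False unfolding depends_only_def by auto
  then have "((\<lambda>u. F (x(k:=u)) y) has_derivative (\<lambda>_. 0)) (at (x k))" by simp
  then show ?thesis using False frechet_derivative_at by metis
qed

lemma partial_y:
  fixes F :: "(nat \<Rightarrow> 'a::euclidean_space) \<Rightarrow> (nat \<Rightarrow> 'a) \<Rightarrow> real"
  assumes fin: "finite I" "finite J" and dep: "depends_only I J F"
    and P: "dprop I J F x y Dx Dy"
  shows "frechet_derivative (\<lambda>u. F x (y(k:=u))) (at (y k)) = (if k\<in>J then Dy k else (\<lambda>_. 0))"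
proof (cases "k \<in> J")
  case True
  have bl1: "\<forall>i\<in>I. bounded_linear (Dx i)" and bl2: "\<forall>j\<in>J. bounded_linear (Dy j)"
    and E: "\<forall>e>0. \<exists>\<delta>>0. \<forall>h g.
           (\<forall>i. i \<notin> I \<longrightarrow> h i = 0) \<longrightarrow> (\<forall>j. j \<notin> J \<longrightarrow> g j = 0) \<longrightarrow>
           (\<Sum>i\<in>I. norm (h i)) + (\<Sum>j\<in>J. norm (g j)) < \<delta> \<longrightarrow>
           \<bar>F (\<lambda>i. x i + h i) (\<lambda>j. y j + g j) - F x y
              - (\<Sum>i\<in>I. Dx i (h i)) - (\<Sum>j\<in>J. Dy j (g j))\<bar>
             \<le> e * ((\<Sum>i\<in>I. norm (h i)) + (\<Sum>j\<in>J. norm (g j)))"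
    using P unfolding dprop_def by auto
  have "((\<lambda>u. F x (y(k:=u))) has_derivative Dy k) (at (y k))"
    unfolding has_derivative_at_alt
  proof (intro conjI allI impI)
    show "bounded_linear (Dy k)" using bl2 True by auto
    fix e :: real assume e: "e > 0"
    then obtain \<delta> where d: "\<delta> > 0" and H: "\<forall>h g.
           (\<forall>i. i \<notin> I \<longrightarrow> h i = 0) \<longrightarrow> (\<forall>j. j \<notin> J \<longrightarrow> g j = 0) \<longrightarrow>
           (\<Sum>i\<in>I. norm (h i)) + (\<Sum>j\<in>J. norm (g j)) < \<delta> \<longrightarrow>
           \<bar>F (\<lambda>i. x i + h i) (\<lambda>j. y j + g j) - F x y
              - (\<Sum>i\<in>I. Dx i (h i)) - (\<Sum>j\<in>J. Dy j (g j))\<bar>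
             \<le> e * ((\<Sum>i\<in>I. norm (h i)) + (\<Sum>j\<in>J. norm (g j)))"
      using E by blast
    show "\<exists>d>0. \<forall>u. norm (u - y k) < d \<longrightarrow>
      norm (F x (y(k:=u)) - F x (y(k := y k)) - Dy k (u - y k)) \<le> e * norm (u - y k)"
    proof (intro exI[of _ \<delta>] conjI allI impI)
      show "\<delta> > 0" by (rule d)
      fix u assume u: "norm (u - y k) < \<delta>"
      define g where "g = (\<lambda>i. if i = k then u - y k else 0)"
      have gJ: "\<forall>i. i \<notin> J \<longrightarrow> g i = 0" using True unfolding g_def by auto
      have s1: "(\<Sum>i\<in>J. norm (g i)) = norm (u - y k)"
        unfolding g_def using fin True by (simp add: if_distrib cong: if_cong)
      have s2: "(\<Sum>i\<in>J. Dy i (g i)) = Dy k (u - y k)"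
      proof -
        have "(\<Sum>i\<in>J. Dy i (g i)) = (\<Sum>i\<in>J. if i = k then Dy k (u - y k) else 0)"
          by (rule sum.cong) (auto simp: g_def bl2 bounded_linear.linear linear_0)
        then show ?thesis using fin True by simp
      qed
      have s3: "(\<Sum>j\<in>I. Dx j ((\<lambda>_. 0) j)) = 0"
        by (rule sum.neutral) (auto simp: bl1 bounded_linear.linear linear_0)
      have ye: "(\<lambda>i. y i + g i) = y(k:=u)" unfolding g_def by auto
      have "\<bar>F (\<lambda>i. x i + 0) (\<lambda>j. y j + g j) - F x y - (\<Sum>j\<in>I. Dx j ((\<lambda>_. 0) j)) - (\<Sum>i\<in>J. Dy i (g i))\<bar>
          \<le> e * ((\<Sum>j\<in>I. norm ((\<lambda>_. (0::'a)) j)) + (\<Sum>i\<in>J. norm (g i)))"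
        using H[rule_format, of "\<lambda>_. 0" g] gJ s1 u by simp
      then show "norm (F x (y(k:=u)) - F x (y(k := y k)) - Dy k (u - y k)) \<le> e * norm (u - y k)"
        using s1 s2 s3 ye by simp
    qed
  qed
  then show ?thesis using True frechet_derivative_at by metis
next
  case False
  have "\<And>u. F x (y(k:=u)) = F x y" using dep False unfolding depends_only_def by auto
  then have "((\<lambda>u. F x (y(k:=u))) has_derivative (\<lambda>_. 0)) (at (y k))" by simp
  then show ?thesis using False frechet_derivative_at by metis
qed


theorem proposition4p5:
  fixes N :: nat
    and L :: "nat \<Rightarrow> (nat \<Rightarrow> real^'d) \<Rightarrow> (nat \<Rightarrow> real^'d) \<Rightarrow> real"
    and xa xb ya yb :: "real^'d"
    and x y :: "nat \<Rightarrow> real^'d"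
  assumes dep: "\<forall>k<N. depends_only {0..k+1} {k..N} (L k)"
    and diff: "\<forall>k<N. diff_in_coords {0..k+1} {k..N} (L k)"
    and bc: "x 0 = xa" "x N = xb" "y 0 = ya" "y N = yb"
  shows "(\<forall>\<eta> :: nat \<Rightarrow> real^'d. \<eta> 0 = 0 \<longrightarrow> \<eta> N = 0 \<longrightarrow>
            ((\<lambda>\<epsilon>. discrete_action N L (\<lambda>i. x i + \<epsilon> *\<^sub>R \<eta> i) (\<lambda>i. y i + \<epsilon> *\<^sub>R \<eta> i))
               has_real_derivative 0) (at 0))
         \<longleftrightarrow>
         (\<forall>k\<in>{1..N-1}.
            (\<lambda>v. (\<Sum>i=k-1..N-1. frechet_derivative (\<lambda>u. L i (x(k := u)) y) (at (x k)) v)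
                + (\<Sum>i=0..k. frechet_derivative (\<lambda>u. L i x (y(k := u))) (at (y k)) v))
            = (\<lambda>v. 0))"
proof -
  have "\<forall>i. \<exists>Dx Dy. i < N \<longrightarrow> dprop {0..i+1} {i..N} (L i) x y Dx Dy"
    using diff diff_dprop by blast
  then obtain DX DY where PD: "\<And>i. i < N \<Longrightarrow> dprop {0..i+1} {i..N} (L i) x y (DX i) (DY i)"
    by metis
  define GX where "GX i k = (if k \<in> {0..i+1} then DX i k else (\<lambda>_. 0))" for i k
  define GY where "GY i k = (if k \<in> {i..N} then DY i k else (\<lambda>_. 0))" for i k
  define H where "H k v = (\<Sum>i<N. GX i k v + GY i k v)" for k v
  have frx: "frechet_derivative (\<lambda>u. L i (x(k := u)) y) (at (x k)) = GX i k" if "i < N" for i k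
    unfolding GX_def using partial_x[OF _ _ _ PD[OF that]] dep that by auto
  have fry: "frechet_derivative (\<lambda>u. L i x (y(k := u))) (at (y k)) = GY i k" if "i < N" for i k
    unfolding GY_def using partial_y[OF _ _ _ PD[OF that]] dep that by auto
  have H0: "H k 0 = 0" for k
  proof -
    have "GX i k 0 = 0 \<and> GY i k 0 = 0" if "i < N" for i
      using PD[OF that] unfolding dprop_def GX_def GY_def
      by (auto simp: bounded_linear.linear linear_0)
    then show ?thesis unfolding H_def by simp
  qed
  have deriv: "((\<lambda>\<epsilon>. discrete_action N L (\<lambda>i. x i + \<epsilon> *\<^sub>R \<eta> i) (\<lambda>i. y i + \<epsilon> *\<^sub>R \<eta> i))
               has_real_derivative (\<Sum>k\<in>{0..N}. H k (\<eta> k))) (at 0)" for \<eta> :: "nat \<Rightarrow> real^'d"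
  proof -
    define \<Phi> where "\<Phi> i = (\<Sum>j\<in>{0..i+1}. DX i j (\<eta> j)) + (\<Sum>j\<in>{i..N}. DY i j (\<eta> j))" for i
    have each: "((\<lambda>\<epsilon>. L i (\<lambda>j. x j + \<epsilon> *\<^sub>R \<eta> j) (\<lambda>j. y j + \<epsilon> *\<^sub>R \<eta> j)) has_real_derivative \<Phi> i) (at 0)"
      if i: "i < N" for i
    proof -
      define \<eta>I where "\<eta>I j = (if j \<in> {0..i+1} then \<eta> j else 0)" for j
      define \<eta>J where "\<eta>J j = (if j \<in> {i..N} then \<eta> j else 0)" for j
      have eq: "L i (\<lambda>j. x j + \<epsilon> *\<^sub>R \<eta> j) (\<lambda>j. y j + \<epsilon> *\<^sub>R \<eta> j)
          = L i (\<lambda>j. x j + \<epsilon> *\<^sub>R \<eta>I j) (\<lambda>j. y j + \<epsilon> *\<^sub>R \<eta>J j)" for \<epsilon>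
        using dep i unfolding depends_only_def \<eta>I_def \<eta>J_def by auto
      have "((\<lambda>\<epsilon>. L i (\<lambda>j. x j + \<epsilon> *\<^sub>R \<eta>I j) (\<lambda>j. y j + \<epsilon> *\<^sub>R \<eta>J j)) has_real_derivative
           ((\<Sum>j\<in>{0..i+1}. DX i j (\<eta>I j)) + (\<Sum>j\<in>{i..N}. DY i j (\<eta>J j)))) (at 0)"
        by (rule dir_deriv[OF _ _ PD[OF i]]) (auto simp: \<eta>I_def \<eta>J_def)
      moreover have "(\<Sum>j\<in>{0..i+1}. DX i j (\<eta>I j)) + (\<Sum>j\<in>{i..N}. DY i j (\<eta>J j)) = \<Phi> i"
        unfolding \<Phi>_def \<eta>I_def \<eta>J_def by simp
      ultimately show ?thesis using eq by simp
    qed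
    have "((\<lambda>\<epsilon>. discrete_action N L (\<lambda>i. x i + \<epsilon> *\<^sub>R \<eta> i) (\<lambda>i. y i + \<epsilon> *\<^sub>R \<eta> i))
               has_real_derivative (\<Sum>i<N. \<Phi> i)) (at 0)"
      unfolding discrete_action_def by (rule DERIV_sum) (use each in auto)
    moreover have "(\<Sum>i<N. \<Phi> i) = (\<Sum>k\<in>{0..N}. H k (\<eta> k))"
    proof -
      have "\<Phi> i = (\<Sum>k\<in>{0..N}. GX i k (\<eta> k) + GY i k (\<eta> k))" if i: "i < N" for i
      proof -
        have a: "(\<Sum>k\<in>{0..N}. GX i k (\<eta> k)) = (\<Sum>j\<in>{0..i+1}. DX i j (\<eta> j))"
        proof -
          have "(\<Sum>k\<in>{0..N}. GX i k (\<eta> k)) = (\<Sum>k\<in>{0..N}. if k \<in> {0..i+1} then DX i k (\<eta> k) else 0)"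
            unfolding GX_def by (rule sum.cong) auto
          also have "\<dots> = (\<Sum>k\<in>{0..N} \<inter> {0..i+1}. DX i k (\<eta> k))"
            by (rule sum.inter_restrict[symmetric]) simp
          also have "{0..N} \<inter> {0..i+1} = {0..i+1}" using i by auto
          finally show ?thesis .
        qed
        have b: "(\<Sum>k\<in>{0..N}. GY i k (\<eta> k)) = (\<Sum>j\<in>{i..N}. DY i j (\<eta> j))"
        proof -
          have "(\<Sum>k\<in>{0..N}. GY i k (\<eta> k)) = (\<Sum>k\<in>{0..N}. if k \<in> {i..N} then DY i k (\<eta> k) else 0)"
            unfolding GY_def by (rule sum.cong) auto
          also have "\<dots> = (\<Sum>k\<in>{0..N} \<inter> {i..N}. DY i k (\<eta> k))"
            by (rule sum.inter_restrict[symmetric]) simp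
          also have "{0..N} \<inter> {i..N} = {i..N}" using i by auto
          finally show ?thesis .
        qed
        show ?thesis unfolding \<Phi>_def sum.distrib a b ..
      qed
      then have "(\<Sum>i<N. \<Phi> i) = (\<Sum>i<N. \<Sum>k\<in>{0..N}. GX i k (\<eta> k) + GY i k (\<eta> k))"
        by (rule sum.cong[OF refl]) simp
      also have "\<dots> = (\<Sum>k\<in>{0..N}. \<Sum>i<N. GX i k (\<eta> k) + GY i k (\<eta> k))"
        by (rule sum.swap)
      finally show ?thesis unfolding H_def .
    qed
    ultimately show ?thesis by simp
  qed
  have rhs: "(\<lambda>v. (\<Sum>i=k-1..N-1. frechet_derivative (\<lambda>u. L i (x(k := u)) y) (at (x k)) v)
                + (\<Sum>i=0..k. frechet_derivative (\<lambda>u. L i x (y(k := u))) (at (y k)) v)) = H k"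
    if k: "k \<in> {1..N-1}" for k
  proof
    fix v
    have A: "(\<Sum>i=k-1..N-1. frechet_derivative (\<lambda>u. L i (x(k := u)) y) (at (x k)) v) = (\<Sum>i<N. GX i k v)"
    proof -
      have "(\<Sum>i=k-1..N-1. frechet_derivative (\<lambda>u. L i (x(k := u)) y) (at (x k)) v) = (\<Sum>i=k-1..N-1. GX i k v)"
        by (rule sum.cong[OF refl]) (use k frx in auto)
      also have "\<dots> = (\<Sum>i<N. GX i k v)"
        by (rule sum.mono_neutral_left) (use k in \<open>auto simp: GX_def\<close>)
      finally show ?thesis .
    qed
    have B: "(\<Sum>i=0..k. frechet_derivative (\<lambda>u. L i x (y(k := u))) (at (y k)) v) = (\<Sum>i<N. GY i k v)"
    proof -
      have "(\<Sum>i=0..k. frechet_derivative (\<lambda>u. L i x (y(k := u))) (at (y k)) v) = (\<Sum>i=0..k. GY i k v)"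
        by (rule sum.cong[OF refl]) (use k fry in auto)
      also have "\<dots> = (\<Sum>i<N. GY i k v)"
        by (rule sum.mono_neutral_left) (use k in \<open>auto simp: GY_def\<close>)
      finally show ?thesis .
    qed
    show "(\<Sum>i=k-1..N-1. frechet_derivative (\<lambda>u. L i (x(k := u)) y) (at (x k)) v)
                + (\<Sum>i=0..k. frechet_derivative (\<lambda>u. L i x (y(k := u))) (at (y k)) v) = H k v"
      unfolding A B H_def sum.distrib ..
  qed
  have main: "(\<forall>\<eta> :: nat \<Rightarrow> real^'d. \<eta> 0 = 0 \<longrightarrow> \<eta> N = 0 \<longrightarrow>
            ((\<lambda>\<epsilon>. discrete_action N L (\<lambda>i. x i + \<epsilon> *\<^sub>R \<eta> i) (\<lambda>i. y i + \<epsilon> *\<^sub>R \<eta> i))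
               has_real_derivative 0) (at 0)) \<longleftrightarrow> (\<forall>k\<in>{1..N-1}. H k = (\<lambda>v. 0))"
  proof
    assume L: "\<forall>\<eta> :: nat \<Rightarrow> real^'d. \<eta> 0 = 0 \<longrightarrow> \<eta> N = 0 \<longrightarrow>
            ((\<lambda>\<epsilon>. discrete_action N L (\<lambda>i. x i + \<epsilon> *\<^sub>R \<eta> i) (\<lambda>i. y i + \<epsilon> *\<^sub>R \<eta> i))
               has_real_derivative 0) (at 0)"
    show "\<forall>k\<in>{1..N-1}. H k = (\<lambda>v. 0)"
    proof (intro ballI ext)
      fix k and v :: "real^'d" assume k: "k \<in> {1..N-1}"
      define \<eta> where "\<eta> j = (if j = k then v else 0)" for j
      have "\<eta> 0 = 0" "\<eta> N = 0" using k unfolding \<eta>_def by auto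
      then have d0: "((\<lambda>\<epsilon>. discrete_action N L (\<lambda>i. x i + \<epsilon> *\<^sub>R \<eta> i) (\<lambda>i. y i + \<epsilon> *\<^sub>R \<eta> i))
               has_real_derivative 0) (at 0)" using L by blast
      have "(\<Sum>j\<in>{0..N}. H j (\<eta> j)) = (\<Sum>j\<in>{0..N}. if j = k then H k v else 0)"
        by (rule sum.cong) (auto simp: \<eta>_def H0)
      also have "\<dots> = H k v" using k by auto
      finally have "((\<lambda>\<epsilon>. discrete_action N L (\<lambda>i. x i + \<epsilon> *\<^sub>R \<eta> i) (\<lambda>i. y i + \<epsilon> *\<^sub>R \<eta> i))
               has_real_derivative H k v) (at 0)" using deriv[of \<eta>] by simp
      then show "H k v = 0" using d0 DERIV_unique by blast
    qed
  next
    assume R: "\<forall>k\<in>{1..N-1}. H k = (\<lambda>v. 0)"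
    show "\<forall>\<eta> :: nat \<Rightarrow> real^'d. \<eta> 0 = 0 \<longrightarrow> \<eta> N = 0 \<longrightarrow>
            ((\<lambda>\<epsilon>. discrete_action N L (\<lambda>i. x i + \<epsilon> *\<^sub>R \<eta> i) (\<lambda>i. y i + \<epsilon> *\<^sub>R \<eta> i))
               has_real_derivative 0) (at 0)"
    proof (intro allI impI)
      fix \<eta> :: "nat \<Rightarrow> real^'d" assume e0: "\<eta> 0 = 0" and eN: "\<eta> N = 0"
      have "(\<Sum>j\<in>{0..N}. H j (\<eta> j)) = 0"
      proof (rule sum.neutral, rule ballI)
        fix j assume j: "j \<in> {0..N}"
        show "H j (\<eta> j) = 0"
        proof (cases "j = 0 \<or> j = N")
          case True then show ?thesis using e0 eN H0 by auto
        next
          case False then have "j \<in> {1..N-1}" using j by auto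
          then show ?thesis using R by simp
        qed
      qed
      then show "((\<lambda>\<epsilon>. discrete_action N L (\<lambda>i. x i + \<epsilon> *\<^sub>R \<eta> i) (\<lambda>i. y i + \<epsilon> *\<^sub>R \<eta> i))
               has_real_derivative 0) (at 0)" using deriv[of \<eta>] by simp
    qed
  qed
  show ?thesis unfolding main using rhs by auto
qed

end
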